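(* Let $G$ be a finite abelian group and let $\rho\ge2$ be an integer. Then $$t_\rho(G)\le\left\lfloor\frac{|G|-2}{\rho-1}\right\rfloor+1.$$
   Context: Groups are written additively. For $A\subseteq G$ let $A_0:=A\cup\{0\}$ and $\langle A\rangle^+_\rho:=\rho A_0=\{a_1+\dots+a_\rho:a_i\in A_0\}$. $\operatorname{diam}^+_A(G):=\min\{\rho\in\mathbb{N}_0:\langle A\rangle^+_\rho=G\}$ ($\min\varnothing=\infty$). The period of $S\subseteq G$ is $\pi(S):=\{g\in G:S+g=S\}$; $S$ is aperiodic if $\pi(S)=\{0\}$. A subset $A\subseteq G$ is $\rho$-maximal if it is maximal under inclusion subject to $\operatorname{diam}^+_A(G)\ge\rho$, i.e. subject to $\langle A\rangle^+_{\rho-1}\neq G$. With the convention $\max\varnothing=0$: $t_\rho(G):=\max\{|A|: A \text{ is an aperiodic } \rho\text{-maximal generating set for } G\}$. *)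

theory Defs
  imports Complex_Main
begin

text \<open>Finite abelian groups are modelled as finite types of class ab_group_add;
the group G is UNIV.\<close>

definition zero_ext :: "'a::ab_group_add set \<Rightarrow> 'a set" where
  "zero_ext A = insert 0 A"

fun sumset :: "nat \<Rightarrow> 'a::ab_group_add set \<Rightarrow> 'a set" where
  "sumset 0 A = {0}"
| "sumset (Suc r) A = {a + b | a b. a \<in> zero_ext A \<and> b \<in> sumset r A}"

definition period :: "'a::ab_group_add set \<Rightarrow> 'a set" where
  "period S = {g. (\<lambda>x. x + g) ` S = S}"

definition aperiodic :: "'a::ab_group_add set \<Rightarrow> bool" where
  "aperiodic S \<longleftrightarrow> period S = {0}"

definition gen_subgroup :: "'a::ab_group_add set \<Rightarrow> 'a set" where
  "gen_subgroup A = \<Inter>{H. A \<subseteq> H \<and> 0 \<in> H \<and> (\<forall>x\<in>H. \<forall>y\<in>H. x + y \<in> H) \<and> (\<forall>x\<in>H. - x \<in> H)}"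

definition generating :: "'a::ab_group_add set \<Rightarrow> bool" where
  "generating A \<longleftrightarrow> gen_subgroup A = UNIV"

definition rho_maximal :: "nat \<Rightarrow> 'a::ab_group_add set \<Rightarrow> bool" where
  "rho_maximal \<rho> A \<longleftrightarrow> sumset (\<rho> - 1) A \<noteq> UNIV \<and>
     (\<forall>B. A \<subset> B \<longrightarrow> sumset (\<rho> - 1) B = UNIV)"

text \<open>t_rho(G), with max of the empty set = 0; G = UNIV of the finite type.\<close>
definition t_rho :: "nat \<Rightarrow> 'a::{ab_group_add,finite} itself \<Rightarrow> nat" where
  "t_rho \<rho> _ = Max (insert 0 (card ` {A :: 'a set. aperiodic A \<and> rho_maximal \<rho> A \<and> generating A}))"

end

theory Submission
  imports Defs
begin

lemma in_period_iff: "g \<in> period X \<longleftrightarrow> (\<forall>x. (x + g \<in> X) = (x \<in> X))"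
proof
  assume "g \<in> period X"
  hence h: "(\<lambda>x. x + g) ` X = X" by (simp add: period_def)
  show "\<forall>x. (x + g \<in> X) = (x \<in> X)"
  proof
    fix x
    show "(x + g \<in> X) = (x \<in> X)"
    proof
      assume "x + g \<in> X"
      then have "x + g \<in> (\<lambda>x. x + g) ` X" using h by simp
      then show "x \<in> X" by auto
    next
      assume "x \<in> X" then have "x + g \<in> (\<lambda>x. x + g) ` X" by auto
      then show "x + g \<in> X" using h by simp
    qed
  qed
next
  assume a: "\<forall>x. (x + g \<in> X) = (x \<in> X)"
  have "(\<lambda>x. x + g) ` X = X"
  proof
    show "(\<lambda>x. x + g) ` X \<subseteq> X" using a by auto
    show "X \<subseteq> (\<lambda>x. x + g) ` X"
    proof
      fix x assume "x \<in> X"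
      then have "x - g \<in> X" using a[rule_format, of "x - g"] by simp
      then show "x \<in> (\<lambda>x. x + g) ` X" by (auto intro: image_eqI[where x="x-g"])
    qed
  qed
  then show "g \<in> period X" by (simp add: period_def)
qed

lemma period_memD: "g \<in> period X \<Longrightarrow> (x + g \<in> X) = (x \<in> X)"
  by (simp add: in_period_iff)

lemma period_zero: "0 \<in> period X"
  by (simp add: in_period_iff)

lemma period_add: "g \<in> period X \<Longrightarrow> h \<in> period X \<Longrightarrow> g + h \<in> period X"
  by (simp add: in_period_iff add.assoc[symmetric])

lemma period_neg: "g \<in> period X \<Longrightarrow> - g \<in> period X"
proof -
  assume g: "g \<in> period X"
  show ?thesis unfolding in_period_iff
  proof
    fix x
    have "(x - g + g \<in> X) = (x - g \<in> X)" using g in_period_iff by blast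
    then show "(x + - g \<in> X) = (x \<in> X)" by simp
  qed
qed

lemma period_Int_sub: "period C1 \<inter> period C2 \<subseteq> period (C1 \<union> C2)"
  by (auto simp: in_period_iff)

lemma helperH:
  fixes C1 C2 :: "'a::{ab_group_add,finite} set"
  assumes x: "x \<in> C2" "x \<notin> C1"
    and N: "\<And>k1 k2. k1 \<in> period C1 \<Longrightarrow> k2 \<in> period C2 \<Longrightarrow> x + k1 + k2 \<in> C1 \<Longrightarrow> x + k1 + k2 \<in> C2"
  shows "card (period C1) \<le> card (C2 - C1) \<or> card (period C2) \<le> card (C2 - C1)"
proof (cases "\<forall>k\<in>period C1. x + k \<in> C2")
  case True
  have "(\<lambda>k. x + k) ` period C1 \<subseteq> C2 - C1"
  proof
    fix z assume "z \<in> (\<lambda>k. x + k) ` period C1"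
    then obtain k where k: "k \<in> period C1" "z = x + k" by auto
    have "x + k \<notin> C1" using x(2) k(1) by (simp add: in_period_iff)
    then show "z \<in> C2 - C1" using True k by auto
  qed
  moreover have "inj_on (\<lambda>k. x + k) (period C1)" by (auto simp: inj_on_def)
  ultimately have "card (period C1) \<le> card (C2 - C1)"
    by (metis card_image card_mono finite)
  then show ?thesis by simp
next
  case False
  then obtain k where k: "k \<in> period C1" "x + k \<notin> C2" by auto
  have "(\<lambda>j. x + j) ` period C2 \<subseteq> C2 - C1"
  proof
    fix z assume "z \<in> (\<lambda>j. x + j) ` period C2"
    then obtain j where j: "j \<in> period C2" "z = x + j" by auto
    have "x + j \<in> C2" using x(1) j(1) by (simp add: in_period_iff)
    moreover have "x + j \<notin> C1"
    proof
      assume h: "x + j \<in> C1"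
      have "x + j + k \<in> C1" using h k(1) by (simp add: in_period_iff)
      then have "x + k + j \<in> C1" by (simp add: algebra_simps)
      then have "x + k + j \<in> C2" using N[OF k(1) j(1)] by simp
      then have "x + k \<in> C2" using j(1) by (simp add: in_period_iff)
      then show False using k(2) by simp
    qed
    ultimately show "z \<in> C2 - C1" using j by auto
  qed
  moreover have "inj_on (\<lambda>k. x + k) (period C2)" by (auto simp: inj_on_def)
  ultimately have "card (period C2) \<le> card (C2 - C1)"
    by (metis card_image card_mono finite)
  then show ?thesis by simp
qed


lemma union_lemma:
  fixes C1 C2 :: "'a::{ab_group_add,finite} set"
  shows "min (card C1 + card (period C1)) (card C2 + card (period C2))
           \<le> card (C1 \<union> C2) + card (period (C1 \<union> C2))"
proof -
  define K1 where "K1 = period C1"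
  define K2 where "K2 = period C2"
  define M where "M = K1 \<inter> K2"
  define D1 where "D1 = C1 - C2"
  define D2 where "D2 = C2 - C1"
  have cU1: "card (C1 \<union> C2) = card C1 + card D2"
  proof -
    show ?thesis using card_Un_disjoint[of C1 "C2 - C1"] by (simp add: D2_def)
  qed
  have cU2: "card (C1 \<union> C2) = card C2 + card D1"
  proof -
    show ?thesis using card_Un_disjoint[of C2 "C1 - C2"] by (simp add: D1_def Un_commute)
  qed
  have MS: "card M \<le> card (period (C1 \<union> C2))"
    unfolding M_def K1_def K2_def by (rule card_mono[OF finite period_Int_sub])
  show ?thesis
  proof (cases "C2 \<subseteq> C1")
    case True
    then have "C1 \<union> C2 = C1" by auto
    then show ?thesis by simp
  next
    case nC2: False
    show ?thesis
    proof (cases "C1 \<subseteq> C2")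
      case True
      then have "C1 \<union> C2 = C2" by auto
      then show ?thesis by simp
    next
      case nC1: False
      have key: "card K1 \<le> card D2 + card M \<or> card K2 \<le> card D1 + card M"
      proof (cases "\<exists>x y k1 k2. x \<in> D2 \<and> y \<in> D1 \<and> k1 \<in> K1 \<and> k2 \<in> K2 \<and> y = x + k1 + k2")
        case True
        then obtain x y k1 k2 where xy: "x \<in> D2" "y \<in> D1" "k1 \<in> K1" "k2 \<in> K2" "y = x + k1 + k2"
          by blast
        define I1 where "I1 = {k \<in> K1. x + k \<in> C2}"
        define I2 where "I2 = {k \<in> K2. x + k \<notin> C1}"
        define J1 where "J1 = {k \<in> K2. y + k \<in> C1}"
        define J2 where "J2 = {k \<in> K1. y + k \<notin> C2}"
        define I1' where "I1' = {k \<in> K1. y + k \<in> C2}"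
        define I2' where "I2' = {k \<in> K2. x + k \<in> C1}"
        have x2: "x \<in> C2" "x \<notin> C1" using xy(1) by (auto simp: D2_def)
        have y1: "y \<in> C1" "y \<notin> C2" using xy(2) by (auto simp: D1_def)
        have a1: "card (I1 \<union> I2) \<le> card D2"
        proof -
          have "(\<lambda>k. x + k) ` (I1 \<union> I2) \<subseteq> D2"
          proof
            fix z assume "z \<in> (\<lambda>k. x + k) ` (I1 \<union> I2)"
            then obtain k where k: "k \<in> I1 \<union> I2" "z = x + k" by auto
            show "z \<in> D2"
            proof (cases "k \<in> I1")
              case True
              then have "x + k \<in> C2" "k \<in> K1" by (auto simp: I1_def)
              moreover have "x + k \<notin> C1" using x2(2) \<open>k \<in> K1\<close> by (simp add: K1_def in_period_iff)
              ultimately show ?thesis using k by (simp add: D2_def)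
            next
              case False
              then have "k \<in> I2" using k by auto
              then have "x + k \<notin> C1" "k \<in> K2" by (auto simp: I2_def)
              moreover have "x + k \<in> C2" using x2(1) \<open>k \<in> K2\<close> by (simp add: K2_def in_period_iff)
              ultimately show ?thesis using k by (simp add: D2_def)
            qed
          qed
          moreover have "inj_on (\<lambda>k. x + k) (I1 \<union> I2)" by (auto simp: inj_on_def)
          ultimately show ?thesis by (metis card_image card_mono finite)
        qed
        have a2: "card (J1 \<union> J2) \<le> card D1"
        proof -
          have "(\<lambda>k. y + k) ` (J1 \<union> J2) \<subseteq> D1"
          proof
            fix z assume "z \<in> (\<lambda>k. y + k) ` (J1 \<union> J2)"
            then obtain k where k: "k \<in> J1 \<union> J2" "z = y + k" by auto
            show "z \<in> D1"
            proof (cases "k \<in> J1")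
              case True
              then have "y + k \<in> C1" "k \<in> K2" by (auto simp: J1_def)
              moreover have "y + k \<notin> C2" using y1(2) \<open>k \<in> K2\<close> by (simp add: K2_def in_period_iff)
              ultimately show ?thesis using k by (simp add: D1_def)
            next
              case False
              then have "k \<in> J2" using k by auto
              then have "y + k \<notin> C2" "k \<in> K1" by (auto simp: J2_def)
              moreover have "y + k \<in> C1" using y1(1) \<open>k \<in> K1\<close> by (simp add: K1_def in_period_iff)
              ultimately show ?thesis using k by (simp add: D1_def)
            qed
          qed
          moreover have "inj_on (\<lambda>k. y + k) (J1 \<union> J2)" by (auto simp: inj_on_def)
          ultimately show ?thesis by (metis card_image card_mono finite)
        qed
        have b1: "card I1 + card I2 \<le> card (I1 \<union> I2) + card M"
        proof -
          have "I1 \<inter> I2 \<subseteq> M" by (auto simp: I1_def I2_def M_def)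
          then have "card (I1 \<inter> I2) \<le> card M" by (simp add: card_mono)
          moreover have "card I1 + card I2 = card (I1 \<union> I2) + card (I1 \<inter> I2)"
            by (rule card_Un_Int) auto
          ultimately show ?thesis by simp
        qed
        have b2: "card J1 + card J2 \<le> card (J1 \<union> J2) + card M"
        proof -
          have "J1 \<inter> J2 \<subseteq> M" by (auto simp: J1_def J2_def M_def)
          then have "card (J1 \<inter> J2) \<le> card M" by (simp add: card_mono)
          moreover have "card J1 + card J2 = card (J1 \<union> J2) + card (J1 \<inter> J2)"
            by (rule card_Un_Int) auto
          ultimately show ?thesis by simp
        qed
        have K1c: "K1 = I1' \<union> J2" "I1' \<inter> J2 = {}" by (auto simp: I1'_def J2_def)
        have K2c: "K2 = I2' \<union> I2" "I2' \<inter> I2 = {}" by (auto simp: I2'_def I2_def)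
        have cK1: "card K1 = card I1' + card J2"
          using K1c by (simp add: card_Un_disjoint)
        have cK2: "card K2 = card I2' + card I2"
          using K2c by (simp add: card_Un_disjoint)
        have K1add: "\<And>a b. a \<in> K1 \<Longrightarrow> b \<in> K1 \<Longrightarrow> a + b \<in> K1"
          by (simp add: K1_def period_add)
        have K1neg: "\<And>a. a \<in> K1 \<Longrightarrow> - a \<in> K1"
          by (simp add: K1_def period_neg)
        have K2add: "\<And>a b. a \<in> K2 \<Longrightarrow> b \<in> K2 \<Longrightarrow> a + b \<in> K2"
          by (simp add: K2_def period_add)
        have K2neg: "\<And>a. a \<in> K2 \<Longrightarrow> - a \<in> K2"
          by (simp add: K2_def period_neg)
        have c1: "card I1' = card I1"
        proof (rule card_bij_eq[where f = "\<lambda>k. k + k1" and g = "\<lambda>k. k - k1"])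
          show "(\<lambda>k. k + k1) ` I1' \<subseteq> I1"
          proof
            fix z assume "z \<in> (\<lambda>k. k + k1) ` I1'"
            then obtain k where k: "k \<in> K1" "y + k \<in> C2" "z = k + k1" by (auto simp: I1'_def)
            have zK: "z \<in> K1" using K1add[OF k(1) xy(3)] k(3) by simp
            have e: "x + z + k2 = y + k" using k(3) xy(5) by (simp add: algebra_simps)
            have "x + z + k2 \<in> C2" using k(2) e by simp
            then have "x + z \<in> C2" using xy(4) by (simp add: K2_def in_period_iff)
            then show "z \<in> I1" using zK by (simp add: I1_def)
          qed
          show "(\<lambda>k. k - k1) ` I1 \<subseteq> I1'"
          proof
            fix z assume "z \<in> (\<lambda>k. k - k1) ` I1"
            then obtain k where k: "k \<in> K1" "x + k \<in> C2" "z = k - k1" by (auto simp: I1_def)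
            have "k + - k1 \<in> K1" using K1add[OF k(1) K1neg[OF xy(3)]] by simp
            then have zK: "z \<in> K1" using k(3) by simp
            have "x + k + k2 \<in> C2" using k(2) xy(4) by (simp add: K2_def in_period_iff)
            moreover have e: "x + k + k2 = y + z" using k(3) xy(5) by (simp add: algebra_simps)
            ultimately have "y + z \<in> C2" by simp
            then show "z \<in> I1'" using zK by (simp add: I1'_def)
          qed
        qed (auto simp: inj_on_def)
        have c2: "card I2' = card J1"
        proof (rule card_bij_eq[where f = "\<lambda>k. k - k2" and g = "\<lambda>k. k + k2"])
          show "(\<lambda>k. k - k2) ` I2' \<subseteq> J1"
          proof
            fix z assume "z \<in> (\<lambda>k. k - k2) ` I2'"
            then obtain k where k: "k \<in> K2" "x + k \<in> C1" "z = k - k2" by (auto simp: I2'_def)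
            have "k + - k2 \<in> K2" using K2add[OF k(1) K2neg[OF xy(4)]] by simp
            then have zK: "z \<in> K2" using k(3) by simp
            have "x + k + k1 \<in> C1" using k(2) xy(3) by (simp add: K1_def in_period_iff)
            moreover have e: "x + k + k1 = y + z" using k(3) xy(5) by (simp add: algebra_simps)
            ultimately have "y + z \<in> C1" by simp
            then show "z \<in> J1" using zK by (simp add: J1_def)
          qed
          show "(\<lambda>k. k + k2) ` J1 \<subseteq> I2'"
          proof
            fix z assume "z \<in> (\<lambda>k. k + k2) ` J1"
            then obtain k where k: "k \<in> K2" "y + k \<in> C1" "z = k + k2" by (auto simp: J1_def)
            have zK: "z \<in> K2" using K2add[OF k(1) xy(4)] k(3) by simp
            have e: "x + z + k1 = y + k" using k(3) xy(5) by (simp add: algebra_simps)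
            have "x + z + k1 \<in> C1" using k(2) e by simp
            then have "x + z \<in> C1" using xy(3) by (simp add: K1_def in_period_iff)
            then show "z \<in> I2'" using zK by (simp add: I2'_def)
          qed
        qed (auto simp: inj_on_def)
        show ?thesis using a1 a2 b1 b2 cK1 cK2 c1 c2 by linarith
      next
        case False
        obtain x where x: "x \<in> C2" "x \<notin> C1" using nC2 by auto
        obtain y where y: "y \<in> C1" "y \<notin> C2" using nC1 by auto
        have hx: "card (period C1) \<le> card (C2 - C1) \<or> card (period C2) \<le> card (C2 - C1)"
        proof (rule helperH[OF x])
          fix k1 k2 assume k: "k1 \<in> period C1" "k2 \<in> period C2" "x + k1 + k2 \<in> C1"
          show "x + k1 + k2 \<in> C2"
          proof (rule ccontr)
            assume "x + k1 + k2 \<notin> C2"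
            then have "x \<in> D2 \<and> x + k1 + k2 \<in> D1 \<and> k1 \<in> K1 \<and> k2 \<in> K2 \<and> x + k1 + k2 = x + k1 + k2"
              using k x by (simp add: D1_def D2_def K1_def K2_def)
            then show False using False by blast
          qed
        qed
        have hy: "card (period C2) \<le> card (C1 - C2) \<or> card (period C1) \<le> card (C1 - C2)"
        proof (rule helperH[OF y])
          fix k1 k2 assume k: "k1 \<in> period C2" "k2 \<in> period C1" "y + k1 + k2 \<in> C2"
          show "y + k1 + k2 \<in> C1"
          proof (rule ccontr)
            assume "y + k1 + k2 \<notin> C1"
            moreover have "y = (y + k1 + k2) + - k2 + - k1" by (simp add: algebra_simps)
            moreover have "- k2 \<in> K1" "- k1 \<in> K2" using k by (simp_all add: K1_def K2_def period_neg)
            ultimately have "y + k1 + k2 \<in> D2 \<and> y \<in> D1 \<and> - k2 \<in> K1 \<and> - k1 \<in> K2 \<and> y = (y + k1 + k2) + - k2 + - k1"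
              using k y by (simp add: D1_def D2_def)
            then show False using False by blast
          qed
        qed
        show ?thesis using hx hy unfolding K1_def K2_def D1_def D2_def by linarith
      qed
      show ?thesis using key cU1 cU2 MS unfolding K1_def K2_def by linarith
    qed
  qed
qed

lemma union_family:
  fixes F :: "'b \<Rightarrow> 'a::{ab_group_add,finite} set"
  assumes "finite I" "I \<noteq> {}" "\<And>i. i \<in> I \<Longrightarrow> m \<le> card (F i) + card (period (F i))"
  shows "m \<le> card (\<Union>i\<in>I. F i) + card (period (\<Union>i\<in>I. F i))"
  using assms
proof (induction I rule: finite_ne_induct)
  case (singleton x) then show ?case by simp
next
  case (insert x I)
  have "m \<le> min (card (F x) + card (period (F x))) (card (\<Union>i\<in>I. F i) + card (period (\<Union>i\<in>I. F i)))"
    using insert by simp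
  also have "\<dots> \<le> card (F x \<union> (\<Union>i\<in>I. F i)) + card (period (F x \<union> (\<Union>i\<in>I. F i)))"
    by (rule union_lemma)
  finally show ?case by simp
qed


definition sset :: "'a::ab_group_add set \<Rightarrow> 'a set \<Rightarrow> 'a set" where
  "sset A B = {a + b | a b. a \<in> A \<and> b \<in> B}"

lemma mem_translate: "(z \<in> (\<lambda>a. a + b) ` A) = (z - b \<in> (A::'a::ab_group_add set))"
proof
  assume "z \<in> (\<lambda>a. a + b) ` A" then show "z - b \<in> A" by auto
next
  assume "z - b \<in> A"
  moreover have "z = (z - b) + b" by simp
  ultimately show "z \<in> (\<lambda>a. a + b) ` A" by blast
qed

lemma kneser_weak:
  fixes A B :: "'a::{ab_group_add,finite} set"
  assumes "A \<noteq> {}" "B \<noteq> {}"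
  shows "card A + card B \<le> card (sset A B) + card (period (sset A B))"
  using assms
proof (induction "card B" arbitrary: A B rule: less_induct)
  case less
  show ?case
  proof (cases "\<exists>b\<in>B. \<forall>a\<in>A. \<forall>b'\<in>B. b' + (a - b) \<in> A")
    case True
    then obtain b where b: "b \<in> B" "\<forall>a\<in>A. \<forall>b'\<in>B. b' + (a - b) \<in> A" by auto
    have C: "sset A B = (\<lambda>a. a + b) ` A"
    proof
      show "sset A B \<subseteq> (\<lambda>a. a + b) ` A"
      proof
        fix z assume "z \<in> sset A B"
        then obtain a b' where ab: "a \<in> A" "b' \<in> B" "z = a + b'" by (auto simp: sset_def)
        then have "b' + (a - b) \<in> A" using b by auto
        moreover have "z = (b' + (a - b)) + b" using ab(3) by (simp add: algebra_simps)
        ultimately show "z \<in> (\<lambda>a. a + b) ` A" by blast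
      qed
      show "(\<lambda>a. a + b) ` A \<subseteq> sset A B" using b(1) by (auto simp: sset_def)
    qed
    have cardC: "card (sset A B) = card A" unfolding C by (rule card_image) (auto simp: inj_on_def)
    have per: "(\<lambda>b'. b' - b) ` B \<subseteq> period (sset A B)"
    proof
      fix g assume "g \<in> (\<lambda>b'. b' - b) ` B"
      then obtain b' where b': "b' \<in> B" "g = b' - b" by auto
      have sub: "(\<lambda>a. a + g) ` A \<subseteq> A"
      proof
        fix z assume "z \<in> (\<lambda>a. a + g) ` A"
        then obtain a where a: "a \<in> A" "z = a + g" by auto
        have "b' + (a - b) \<in> A" using b(2) a(1) b'(1) by auto
        moreover have "z = b' + (a - b)" using a(2) b'(2) by (simp add: algebra_simps)
        ultimately show "z \<in> A" by simp
      qed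
      have "card ((\<lambda>a. a + g) ` A) = card A" by (rule card_image) (auto simp: inj_on_def)
      then have eq: "(\<lambda>a. a + g) ` A = A" using sub by (simp add: card_subset_eq)
      hence gA: "g \<in> period A" by (simp add: period_def)
      show "g \<in> period (sset A B)"
        unfolding in_period_iff C mem_translate
      proof
        fix x
        have "x + g - b = (x - b) + g" by (simp add: algebra_simps)
        then show "(x + g - b \<in> A) = (x - b \<in> A)" using period_memD[OF gA, of "x - b"] by metis
      qed
    qed
    have "card B = card ((\<lambda>b'. b' - b) ` B)" by (rule card_image[symmetric]) (auto simp: inj_on_def)
    also have "\<dots> \<le> card (period (sset A B))" by (rule card_mono[OF finite per])
    finally show ?thesis using cardC by simp
  next
    case False
    then have "\<forall>b\<in>B. \<exists>a. a \<in> A \<and> (\<exists>b'\<in>B. b' + (a - b) \<notin> A)" by blast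
    then obtain f where f: "\<And>b. b \<in> B \<Longrightarrow> f b \<in> A \<and> (\<exists>b'\<in>B. b' + (f b - b) \<notin> A)"
      by metis
    define EA where "EA = (\<lambda>e. A \<union> (\<lambda>x. x + e) ` B)"
    define EB where "EB = (\<lambda>e. {x \<in> B. x + e \<in> A})"
    define F where "F = (\<lambda>b. sset (EA (f b - b)) (EB (f b - b)))"
    have Fb: "card A + card B \<le> card (F b) + card (period (F b))" if bB: "b \<in> B" for b
    proof -
      define e where "e = f b - b"
      have bE: "b \<in> EB e" using f[OF bB] bB by (simp add: EB_def e_def)
      obtain b' where b': "b' \<in> B" "b' + e \<notin> A" using f[OF bB] by (auto simp: e_def)
      have "EB e \<subset> B" using b' by (auto simp: EB_def)
      then have lt: "card (EB e) < card B" by (simp add: psubset_card_mono)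
      have ne1: "EA e \<noteq> {}" using less.prems(1) by (simp add: EA_def)
      have ne2: "EB e \<noteq> {}" using bE by auto
      have IH: "card (EA e) + card (EB e) \<le> card (sset (EA e) (EB e)) + card (period (sset (EA e) (EB e)))"
        using less.hyps[OF lt ne1 ne2] .
      have cT: "card ((\<lambda>x. x + e) ` B) = card B" by (rule card_image) (auto simp: inj_on_def)
      have AT: "A \<inter> (\<lambda>x. x + e) ` B = (\<lambda>x. x + e) ` EB e" by (auto simp: EB_def)
      have cAT: "card ((\<lambda>x. x + e) ` EB e) = card (EB e)" by (rule card_image) (auto simp: inj_on_def)
      have "card A + card ((\<lambda>x. x + e) ` B) = card (A \<union> (\<lambda>x. x + e) ` B) + card (A \<inter> (\<lambda>x. x + e) ` B)"
        by (rule card_Un_Int) auto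
      then have "card (EA e) + card (EB e) = card A + card B" using cT AT cAT by (simp add: EA_def)
      then show ?thesis using IH by (simp add: F_def e_def)
    qed
    have cover: "sset A B = (\<Union>b\<in>B. F b)"
    proof
      show "sset A B \<subseteq> (\<Union>b\<in>B. F b)"
      proof
        fix z assume "z \<in> sset A B"
        then obtain a b where ab: "a \<in> A" "b \<in> B" "z = a + b" by (auto simp: sset_def)
        have "b \<in> EB (f b - b)" using f[OF ab(2)] ab(2) by (simp add: EB_def)
        moreover have "a \<in> EA (f b - b)" using ab(1) by (simp add: EA_def)
        ultimately have "z \<in> F b" using ab(3) by (auto simp: F_def sset_def)
        then show "z \<in> (\<Union>b\<in>B. F b)" using ab(2) by auto
      qed
      show "(\<Union>b\<in>B. F b) \<subseteq> sset A B"
      proof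
        fix z assume "z \<in> (\<Union>b\<in>B. F b)"
        then obtain b where bB: "b \<in> B" and z: "z \<in> F b" by auto
        define e where "e = f b - b"
        from z obtain u v where uv: "u \<in> EA e" "v \<in> EB e" "z = u + v"
          by (auto simp: F_def sset_def e_def)
        have vB: "v \<in> B" "v + e \<in> A" using uv(2) by (auto simp: EB_def)
        show "z \<in> sset A B"
        proof (cases "u \<in> A")
          case True
          then show ?thesis using uv vB by (auto simp: sset_def)
        next
          case False
          then obtain w where w: "w \<in> B" "u = w + e" using uv(1) by (auto simp: EA_def)
          have "z = (v + e) + w" using uv(3) w(2) by (simp add: algebra_simps)
          then show ?thesis using vB w(1) by (auto simp: sset_def)
        qed
      qed
    qed
    show ?thesis unfolding cover
      by (rule union_family) (use less.prems(2) Fb in auto)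
  qed
qed


lemma sumset_cong: "zero_ext A = zero_ext B \<Longrightarrow> sumset r A = sumset r B"
  by (induction r) simp_all

lemma sumset_Suc_sset: "sumset (Suc r) A = sset (zero_ext A) (sumset r A)"
  by (simp add: sset_def)

lemma zero_in_sumset: "0 \<in> sumset r A"
proof (induction r)
  case 0 then show ?case by simp
next
  case (Suc r)
  have "(0::'a) = 0 + 0" by simp
  moreover have "(0::'a) \<in> zero_ext A" by (simp add: zero_ext_def)
  ultimately show ?case using Suc by (simp only: sumset.simps) blast
qed

lemma period_sset: "g \<in> period X \<Longrightarrow> g \<in> period (sset Y X)"
proof -
  assume g: "g \<in> period X"
  show ?thesis unfolding in_period_iff
  proof
    fix z
    show "(z + g \<in> sset Y X) = (z \<in> sset Y X)"
    proof
      assume "z + g \<in> sset Y X"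
      then obtain y x where yx: "y \<in> Y" "x \<in> X" "z + g = y + x" by (auto simp: sset_def)
      have "x - g + g \<in> X" using yx(2) by simp
      then have "x - g \<in> X" using period_memD[OF g, of "x - g"] by simp
      moreover have "z = y + (x - g)"
      proof -
        have "z = (z + g) - g" by simp
        also have "\<dots> = y + (x - g)" using yx(3) by (simp add: add_diff_eq)
        finally show ?thesis .
      qed
      ultimately show "z \<in> sset Y X" using yx(1) by (auto simp: sset_def)
    next
      assume "z \<in> sset Y X"
      then obtain y x where yx: "y \<in> Y" "x \<in> X" "z = y + x" by (auto simp: sset_def)
      have "x + g \<in> X" using yx(2) period_memD[OF g, of x] by simp
      moreover have "z + g = y + (x + g)" using yx(3) by (simp add: algebra_simps)
      ultimately show "z + g \<in> sset Y X" using yx(1) unfolding sset_def by blast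
    qed
  qed
qed

lemma period_sumset_mono: "j \<le> k \<Longrightarrow> period (sumset j A) \<subseteq> period (sumset k A)"
proof (induction k rule: dec_induct)
  case base then show ?case by simp
next
  case (step k)
  have "period (sumset k A) \<subseteq> period (sumset (Suc k) A)"
    unfolding sumset_Suc_sset using period_sset by blast
  then show ?case using step by blast
qed

lemma sumset_shift_sub:
  assumes P0: "0 \<in> P" and Padd: "\<And>p q. p \<in> P \<Longrightarrow> q \<in> P \<Longrightarrow> p + q \<in> P" and gP: "g \<in> P"
  shows "sumset r (A \<union> (\<lambda>x. x + g) ` A) \<subseteq> {s + p | s p. s \<in> sumset r A \<and> p \<in> P}"
proof (induction r)
  case 0
  have "(0::'a) = 0 + 0" by simp
  then show ?case using P0 by auto
next
  case (Suc r)
  show ?case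
  proof
    fix z assume "z \<in> sumset (Suc r) (A \<union> (\<lambda>x. x + g) ` A)"
    then obtain a w where aw: "a \<in> zero_ext (A \<union> (\<lambda>x. x + g) ` A)" "w \<in> sumset r (A \<union> (\<lambda>x. x + g) ` A)" "z = a + w"
      by auto
    obtain s p where sp: "s \<in> sumset r A" "p \<in> P" "w = s + p" using Suc aw(2) by blast
    obtain a' q where aq: "a' \<in> zero_ext A" "q \<in> P" "a = a' + q"
    proof (cases "a = 0 \<or> a \<in> A")
      case True
      then show ?thesis using that[of a 0] P0 by (auto simp: zero_ext_def)
    next
      case False
      then obtain x where "x \<in> A" "a = x + g" using aw(1) by (auto simp: zero_ext_def)
      then show ?thesis using that[of x g] gP by (auto simp: zero_ext_def)
    qed
    have "z = (a' + s) + (q + p)" using aw(3) sp(3) aq(3) by (simp add: algebra_simps)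
    moreover have "a' + s \<in> sumset (Suc r) A" using aq(1) sp(1) by auto
    moreover have "q + p \<in> P" using Padd aq(2) sp(2) by simp
    ultimately show "z \<in> {s + p | s p. s \<in> sumset (Suc r) A \<and> p \<in> P}" by blast
  qed
qed

lemma main_bound:
  fixes A :: "'a::{ab_group_add,finite} set"
  assumes ap: "aperiodic A" and mx: "rho_maximal \<rho> A" and r2: "\<rho> \<ge> 2"
  shows "(\<rho> - 1) * (card A - 1) + 2 \<le> card (UNIV :: 'a set)"
proof -
  define k where "k = \<rho> - 1"
  have k1: "k \<ge> 1" using r2 by (simp add: k_def)
  have notU: "sumset k A \<noteq> UNIV" using mx by (simp add: rho_maximal_def k_def)
  have maxB: "\<And>B. A \<subset> B \<Longrightarrow> sumset k B = UNIV" using mx by (simp add: rho_maximal_def k_def)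
  have zA: "0 \<in> A"
  proof (rule ccontr)
    assume "0 \<notin> A"
    then have "A \<subset> insert 0 A" by auto
    then have "sumset k (insert 0 A) = UNIV" by (rule maxB)
    moreover have "sumset k (insert 0 A) = sumset k A" by (rule sumset_cong) (simp add: zero_ext_def)
    ultimately show False using notU by simp
  qed
  have zeA: "zero_ext A = A" using zA by (auto simp: zero_ext_def)
  have SS: "\<And>r. sumset (Suc r) A = sset A (sumset r A)" using sumset_Suc_sset zeA by metis
  have perk: "period (sumset k A) = {0}"
  proof
    show "{0} \<subseteq> period (sumset k A)" by (simp add: period_zero)
    show "period (sumset k A) \<subseteq> {0}"
    proof
      fix g assume gP: "g \<in> period (sumset k A)"
      define P where "P = period (sumset k A)"
      define B where "B = A \<union> (\<lambda>x. x + g) ` A"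
      have "sumset k B \<subseteq> {s + p | s p. s \<in> sumset k A \<and> p \<in> P}"
        unfolding B_def by (rule sumset_shift_sub) (use gP in \<open>auto simp: P_def period_zero period_add\<close>)
      also have "\<dots> \<subseteq> sumset k A"
      proof
        fix z assume "z \<in> {s + p | s p. s \<in> sumset k A \<and> p \<in> P}"
        then obtain s p where "s \<in> sumset k A" "p \<in> P" "z = s + p" by auto
        then show "z \<in> sumset k A" using period_memD[of p "sumset k A" s] by (simp add: P_def)
      qed
      finally have "sumset k B \<noteq> UNIV" using notU by auto
      then have "\<not> A \<subset> B" using maxB by blast
      then have "(\<lambda>x. x + g) ` A \<subseteq> A" by (auto simp: B_def)
      moreover have "card ((\<lambda>x. x + g) ` A) = card A" by (rule card_image) (auto simp: inj_on_def)
      ultimately have "(\<lambda>x. x + g) ` A = A" by (simp add: card_subset_eq)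
      then have "g \<in> period A" by (simp add: period_def)
      then show "g \<in> {0}" using ap by (simp add: aperiodic_def)
    qed
  qed
  have perj: "\<And>j. j \<le> k \<Longrightarrow> period (sumset j A) = {0}"
    using period_sumset_mono perk period_zero by blast
  have grow: "j \<le> k \<Longrightarrow> j * (card A - 1) + 1 \<le> card (sumset j A)" for j
  proof (induction j)
    case 0 then show ?case by simp
  next
    case (Suc j)
    have A0: "A \<noteq> {}" using zA by auto
    have S0: "sumset j A \<noteq> {}" using zero_in_sumset by auto
    have "card A + card (sumset j A) \<le> card (sset A (sumset j A)) + card (period (sset A (sumset j A)))"
      by (rule kneser_weak[OF A0 S0])
    also have "\<dots> = card (sumset (Suc j) A) + 1" using perj[OF Suc.prems] SS by simp
    finally have "card A + card (sumset j A) \<le> card (sumset (Suc j) A) + 1" .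
    moreover have "j * (card A - 1) + 1 \<le> card (sumset j A)" using Suc by simp
    moreover have "card A \<ge> 1" using A0 by (simp add: Suc_leI card_gt_0_iff)
    ultimately show ?case by (simp add: algebra_simps)
  qed
  obtain t where t: "t \<notin> sumset k A" using notU by auto
  obtain k' where kk: "k = Suc k'" using k1 by (cases k) auto
  have disj: "A \<inter> (\<lambda>s. t - s) ` sumset k' A = {}"
  proof (rule ccontr)
    assume "A \<inter> (\<lambda>s. t - s) ` sumset k' A \<noteq> {}"
    then obtain a s where "a \<in> A" "s \<in> sumset k' A" "a = t - s" by auto
    then have "t = a + s" "a \<in> A" "s \<in> sumset k' A" by simp_all
    then have "t \<in> sset A (sumset k' A)" unfolding sset_def by blast
    then have "t \<in> sumset k A" using SS[of k'] kk by simp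
    then show False using t by simp
  qed
  have "card A + card (sumset k' A) = card (A \<union> (\<lambda>s. t - s) ` sumset k' A)"
  proof -
    have "card ((\<lambda>s. t - s) ` sumset k' A) = card (sumset k' A)" by (rule card_image) (auto simp: inj_on_def)
    then show ?thesis using disj by (simp add: card_Un_disjoint)
  qed
  also have "\<dots> \<le> card (UNIV :: 'a set)" by (rule card_mono) auto
  finally have c: "card A + card (sumset k' A) \<le> card (UNIV :: 'a set)" .
  have g: "k' * (card A - 1) + 1 \<le> card (sumset k' A)" using grow kk by simp
  have "card A > 0" using zA by (auto simp: card_gt_0_iff)
  then have "card A \<ge> 1" by simp
  then obtain c where cA: "card A = Suc c" by (cases "card A") auto
  show ?thesis using c g cA kk unfolding k_def[symmetric] by simp
qed


lemma floor_bound: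
  fixes n m \<rho> :: nat
  assumes r2: "\<rho> \<ge> 2" and n1: "n \<ge> 1" and h: "m = 0 \<or> (\<rho> - 1) * (m - 1) + 2 \<le> n"
  shows "int m \<le> floor ((real n - 2) / (real \<rho> - 1)) + 1"
proof -
  obtain r where r: "\<rho> = Suc (Suc r)" using r2 by (metis add_2_eq_Suc le_Suc_ex)
  have pos: "real \<rho> - 1 > 0" using r2 by simp
  have "real m - 1 \<le> (real n - 2) / (real \<rho> - 1)"
  proof (cases "m = 0")
    case True
    have "(real m - 1) * (real \<rho> - 1) \<le> real n - 2" using True r n1 by simp
    then show ?thesis using pos by (simp add: pos_le_divide_eq)
  next
    case False
    then obtain c where c: "m = Suc c" by (cases m) auto
    have "Suc r * c + 2 \<le> n" using h False c r by simp
    then have "real (Suc r * c + 2) \<le> real n" by (simp only: of_nat_le_iff)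
    then have "(real r + 1) * real c + 2 \<le> real n" by (simp add: algebra_simps)
    then have "(real m - 1) * (real \<rho> - 1) \<le> real n - 2" using c r by (simp add: algebra_simps)
    then show ?thesis using pos by (simp add: pos_le_divide_eq)
  qed
  then have "int m - 1 \<le> floor ((real n - 2) / (real \<rho> - 1))"
    by (simp add: le_floor_iff)
  then show ?thesis by simp
qed

theorem proposition2p8:
  fixes \<rho> :: nat
  assumes "\<rho> \<ge> 2"
  shows "int (t_rho \<rho> TYPE('a::{ab_group_add,finite}))
           \<le> floor ((real (card (UNIV :: 'a set)) - 2) / (real \<rho> - 1)) + 1"
proof -
  define S where "S = {A :: 'a set. aperiodic A \<and> rho_maximal \<rho> A \<and> generating A}"
  have fin: "finite (insert 0 (card ` S))" by simp
  have mem: "t_rho \<rho> TYPE('a) \<in> insert 0 (card ` S)"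
    unfolding t_rho_def S_def[symmetric] by (rule Max_in[OF fin]) simp
  have n1: "card (UNIV :: 'a set) \<ge> 1"
    by (metis One_nat_def Suc_leI UNIV_not_empty card_gt_0_iff finite)
  have "t_rho \<rho> TYPE('a) = 0 \<or> (\<rho> - 1) * (t_rho \<rho> TYPE('a) - 1) + 2 \<le> card (UNIV :: 'a set)"
  proof (cases "t_rho \<rho> TYPE('a) = 0")
    case False
    then obtain A where A: "A \<in> S" "t_rho \<rho> TYPE('a) = card A" using mem by auto
    have "(\<rho> - 1) * (card A - 1) + 2 \<le> card (UNIV :: 'a set)"
      using A(1) assms by (intro main_bound) (auto simp: S_def)
    then show ?thesis using A(2) by simp
  qed simp
  then show ?thesis using floor_bound[OF assms n1] by blast
qed

end
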